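(* Consider the deterministic split-node max-neighbour algorithm described in the context, on a dynamic graph $(G_r)_{r\ge1}$ with node set $V$. For every round $r\ge1$, \[ D_r\ge t_{r-1}/30, \] where $t_r:=\max_{u,v\in V}|w_r(u)-w_r(v)|$.
   Context: Setting: a fixed set $V$ of $n$ nodes, a sequence of connected graphs $G_r=(V,E_r)$ ($r\ge1$), $N_r(v)$ the neighbours of $v$ in $G_r$, non-negative real loads $w_0(v)$, and $w_r(v)$ the load of $v$ at the end of round $r$. Algorithm: each node $v$ is split into two virtual nodes $v_s$ (sender) and $v_a$ (receiver). In round $r$: set $w_r^1(v_s)=w_r^1(v_a)=w_{r-1}(v)/2$. Each $v_s$ sends a proposal to $u_a$ where $u\in N_r(v)$ maximizes $|w_{r-1}(u)-w_{r-1}(v)|$ (ties broken by a fixed deterministic rule). Each $v_a$ that received proposals accepts exactly one, from $u_s$ with $u$ maximizing $|w_{r-1}(u)-w_{r-1}(v)|$ among proposers (deterministic tie-breaking). For each accepted pair $(u_s,v_a)$, set both virtual loads to $(w_r^1(u_s)+w_r^1(v_a))/2$; other virtual nodes keep their value; then $w_r(v)$ is the sum of the two virtual loads of $v$. An ordered pair $(u,v)$ connects at round $r$ if $u_s$'s proposal to $v_a$ was accepted in round $r$; $A_r$ is the set of ordered pairs that connect at round $r$, and $D_r=\frac12\sum_{(u,v)\in A_r}|w_{r-1}(u)-w_{r-1}(v)|$. *)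

theory Defs
  imports Complex_Main
begin

text \<open>Graph sequence: E r is the (undirected) edge set of G_r, given as a set of ordered pairs.
  N r v is the neighbourhood of v in G_r.\<close>

definition nbrs :: "(nat \<Rightarrow> ('v \<times> 'v) set) \<Rightarrow> nat \<Rightarrow> 'v \<Rightarrow> 'v set" where
  "nbrs E r v = {u. (v, u) \<in> E r}"

definition connected_graph :: "'v set \<Rightarrow> ('v \<times> 'v) set \<Rightarrow> bool" where
  "connected_graph V F \<longleftrightarrow> F \<subseteq> V \<times> V \<and> sym F \<and> irrefl F \<and>
     (\<forall>u\<in>V. \<forall>v\<in>V. (u, v) \<in> F\<^sup>*)"

text \<open>Round-level notions. N: neighbourhoods of the current graph, p: proposal target of each
  sender, a: proposal accepted by each receiver, w: loads at the beginning of the round.\<close>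

definition proposers :: "'v set \<Rightarrow> ('v \<Rightarrow> 'v set) \<Rightarrow> ('v \<Rightarrow> 'v) \<Rightarrow> 'v \<Rightarrow> 'v set" where
  "proposers V N p v = {u \<in> V. N u \<noteq> {} \<and> p u = v}"

definition valid_proposal ::
  "'v set \<Rightarrow> ('v \<Rightarrow> 'v set) \<Rightarrow> ('v \<Rightarrow> real) \<Rightarrow> ('v \<Rightarrow> 'v) \<Rightarrow> bool" where
  "valid_proposal V N w p \<longleftrightarrow>
     (\<forall>v\<in>V. N v \<noteq> {} \<longrightarrow> p v \<in> N v \<and> (\<forall>u\<in>N v. \<bar>w u - w v\<bar> \<le> \<bar>w (p v) - w v\<bar>))"

definition valid_accept ::
  "'v set \<Rightarrow> ('v \<Rightarrow> 'v set) \<Rightarrow> ('v \<Rightarrow> real) \<Rightarrow> ('v \<Rightarrow> 'v) \<Rightarrow> ('v \<Rightarrow> 'v) \<Rightarrow> bool" where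
  "valid_accept V N w p a \<longleftrightarrow>
     (\<forall>v\<in>V. proposers V N p v \<noteq> {} \<longrightarrow> a v \<in> proposers V N p v \<and>
        (\<forall>u\<in>proposers V N p v. \<bar>w u - w v\<bar> \<le> \<bar>w (a v) - w v\<bar>))"

definition connections ::
  "'v set \<Rightarrow> ('v \<Rightarrow> 'v set) \<Rightarrow> ('v \<Rightarrow> 'v) \<Rightarrow> ('v \<Rightarrow> 'v) \<Rightarrow> ('v \<times> 'v) set" where
  "connections V N p a = {(u, v). u \<in> V \<and> N u \<noteq> {} \<and> p u = v \<and> a v = u}"

text \<open>One round: the sender half and the receiver half of each node.\<close>
definition step ::
  "'v set \<Rightarrow> ('v \<Rightarrow> 'v set) \<Rightarrow> ('v \<Rightarrow> 'v) \<Rightarrow> ('v \<Rightarrow> 'v) \<Rightarrow> ('v \<Rightarrow> real) \<Rightarrow> 'v \<Rightarrow> real" where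
  "step V N p a w v =
     (if (v, p v) \<in> connections V N p a then (w v / 2 + w (p v) / 2) / 2 else w v / 2)
   + (if proposers V N p v \<noteq> {} then (w (a v) / 2 + w v / 2) / 2 else w v / 2)"

text \<open>load ... r = w_r. Proposal/acceptance choices for round r are P r and Acc r.\<close>
primrec load ::
  "'v set \<Rightarrow> (nat \<Rightarrow> ('v \<times> 'v) set) \<Rightarrow> (nat \<Rightarrow> 'v \<Rightarrow> 'v) \<Rightarrow> (nat \<Rightarrow> 'v \<Rightarrow> 'v)
    \<Rightarrow> ('v \<Rightarrow> real) \<Rightarrow> nat \<Rightarrow> 'v \<Rightarrow> real" where
  "load V E P Acc w0 0 = w0"
| "load V E P Acc w0 (Suc r) =
     step V (nbrs E (Suc r)) (P (Suc r)) (Acc (Suc r)) (load V E P Acc w0 r)"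

definition D_round ::
  "'v set \<Rightarrow> (nat \<Rightarrow> ('v \<times> 'v) set) \<Rightarrow> (nat \<Rightarrow> 'v \<Rightarrow> 'v) \<Rightarrow> (nat \<Rightarrow> 'v \<Rightarrow> 'v)
    \<Rightarrow> ('v \<Rightarrow> real) \<Rightarrow> nat \<Rightarrow> real" where
  "D_round V E P Acc w0 r =
     (1/2) * (\<Sum>(u, v)\<in>connections V (nbrs E r) (P r) (Acc r).
                \<bar>load V E P Acc w0 (r - 1) u - load V E P Acc w0 (r - 1) v\<bar>)"

definition discrepancy :: "'v set \<Rightarrow> ('v \<Rightarrow> real) \<Rightarrow> real" where
  "discrepancy V w = Max {\<bar>w u - w v\<bar> | u v. u \<in> V \<and> v \<in> V}"

end

theory Submission
  imports Defs "HOL-Analysis.Analysis"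
begin

lemma cover_len:
  fixes c e :: "'a \<Rightarrow> real"
  assumes "finite R" "\<And>x. x \<in> R \<Longrightarrow> e x \<ge> 0" "lo \<le> hi"
    and "{lo..hi} \<subseteq> (\<Union>x\<in>R. {c x - 2 * e x .. c x + 2 * e x})"
  shows "hi - lo \<le> (\<Sum>x\<in>R. 4 * e x)"
proof -
  have fm: "(\<Union>x\<in>R. {c x - 2 * e x .. c x + 2 * e x}) \<in> fmeasurable lborel"
    using assms(1) by (intro fmeasurable.finite_UN fmeasurable_compact) auto
  have "hi - lo = measure lborel {lo..hi}" using assms(3) by simp
  also have "\<dots> \<le> measure lborel (\<Union>x\<in>R. {c x - 2 * e x .. c x + 2 * e x})"
    by (rule measure_mono_fmeasurable[OF assms(4) _ fm]) simp
  also have "\<dots> \<le> (\<Sum>x\<in>R. measure lborel {c x - 2 * e x .. c x + 2 * e x})"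
    by (rule measure_UNION_le[OF assms(1)]) simp
  also have "\<dots> = (\<Sum>x\<in>R. 4 * e x)"
    by (rule sum.cong) (use assms(2) in auto)
  finally show ?thesis .
qed

lemma path_cross:
  fixes w :: "'a \<Rightarrow> real"
  assumes "(u, v) \<in> F\<^sup>*"
  shows "w u \<le> y \<Longrightarrow> y \<le> w v \<Longrightarrow> y = w u \<or> (\<exists>s t. (s, t) \<in> F \<and> w s \<le> y \<and> y \<le> w t)"
  using assms
proof (induction v rule: rtrancl_induct)
  case base
  then show ?case by simp
next
  case (step b c)
  show ?case
  proof (cases "y \<le> w b")
    case True
    then show ?thesis using step by blast
  next
    case False
    then have "w b \<le> y" by simp
    then show ?thesis using step.hyps(2) step.prems(2) by blast
  qed
qed

theorem lemma3:
  fixes V :: "'v set" and E :: "nat \<Rightarrow> ('v \<times> 'v) set"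
    and P Acc :: "nat \<Rightarrow> 'v \<Rightarrow> 'v" and w0 :: "'v \<Rightarrow> real" and r :: nat
  assumes "finite V" and "V \<noteq> {}"
    and "\<And>s. s \<ge> 1 \<Longrightarrow> connected_graph V (E s)"
    and "\<And>v. v \<in> V \<Longrightarrow> w0 v \<ge> 0"
    and "\<And>s. s \<ge> 1 \<Longrightarrow>
           valid_proposal V (nbrs E s) (load V E P Acc w0 (s - 1)) (P s)"
    and "\<And>s. s \<ge> 1 \<Longrightarrow>
           valid_accept V (nbrs E s) (load V E P Acc w0 (s - 1)) (P s) (Acc s)"
    and "r \<ge> 1"
  shows "D_round V E P Acc w0 r \<ge> discrepancy V (load V E P Acc w0 (r - 1)) / 30"
proof -
  define F where "F = E r"
  define N where "N = nbrs E r"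
  define p where "p = P r"
  define a where "a = Acc r"
  define w where "w = load V E P Acc w0 (r - 1)"
  have cg: "connected_graph V F" using assms(3,7) unfolding F_def by blast
  have vp: "valid_proposal V N w p" using assms(5,7) unfolding N_def w_def p_def by blast
  have va: "valid_accept V N w p a" using assms(6,7) unfolding N_def w_def p_def a_def by blast
  have FV: "F \<subseteq> V \<times> V" and Fconn: "\<And>u v. u \<in> V \<Longrightarrow> v \<in> V \<Longrightarrow> (u, v) \<in> F\<^sup>*"
    using cg unfolding connected_graph_def by auto
  have Nd: "u \<in> N v \<longleftrightarrow> (v, u) \<in> F" for u v unfolding N_def F_def nbrs_def by simp
  have NV: "u \<in> N v \<Longrightarrow> u \<in> V \<and> v \<in> V" for u v using FV Nd by auto
  have pN: "v \<in> V \<Longrightarrow> N v \<noteq> {} \<Longrightarrow> p v \<in> N v" for v using vp unfolding valid_proposal_def by blast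
  have pmax: "v \<in> V \<Longrightarrow> u \<in> N v \<Longrightarrow> \<bar>w u - w v\<bar> \<le> \<bar>w (p v) - w v\<bar>" for u v
    using vp unfolding valid_proposal_def by blast
  have aP: "x \<in> V \<Longrightarrow> proposers V N p x \<noteq> {} \<Longrightarrow> a x \<in> proposers V N p x" for x
    using va unfolding valid_accept_def by blast
  have amax: "x \<in> V \<Longrightarrow> u \<in> proposers V N p x \<Longrightarrow> \<bar>w u - w x\<bar> \<le> \<bar>w (a x) - w x\<bar>" for u x
    using va unfolding valid_accept_def by blast
  define R where "R = {x \<in> V. proposers V N p x \<noteq> {}}"
  define e where "e x = \<bar>w (a x) - w x\<bar>" for x
  have finR: "finite R" using assms(1) unfolding R_def by simp
  have e0: "e x \<ge> 0" for x unfolding e_def by simp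
  have conn: "connections V N p a = (\<lambda>x. (a x, x)) ` R"
  proof
    show "connections V N p a \<subseteq> (\<lambda>x. (a x, x)) ` R"
    proof
      fix z assume "z \<in> connections V N p a"
      then obtain u v where z: "z = (u, v)" "u \<in> V" "N u \<noteq> {}" "p u = v" "a v = u"
        unfolding connections_def by blast
      then have "v \<in> V" using pN NV by blast
      moreover have "u \<in> proposers V N p v" using z unfolding proposers_def by blast
      ultimately have "v \<in> R" unfolding R_def by blast
      then show "z \<in> (\<lambda>x. (a x, x)) ` R" using z by force
    qed
  next
    show "(\<lambda>x. (a x, x)) ` R \<subseteq> connections V N p a"
    proof
      fix z assume "z \<in> (\<lambda>x. (a x, x)) ` R"
      then obtain x where x: "x \<in> R" "z = (a x, x)" by blast
      then have "a x \<in> proposers V N p x" using aP unfolding R_def by blast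
      then show "z \<in> connections V N p a" using x unfolding proposers_def connections_def by blast
    qed
  qed
  have D: "D_round V E P Acc w0 r = 1/2 * (\<Sum>x\<in>R. e x)"
  proof -
    have "D_round V E P Acc w0 r = 1/2 * (\<Sum>(u, v)\<in>connections V N p a. \<bar>w u - w v\<bar>)"
      unfolding D_round_def N_def p_def a_def w_def by simp
    also have "(\<Sum>(u, v)\<in>connections V N p a. \<bar>w u - w v\<bar>) = (\<Sum>x\<in>R. e x)"
      unfolding conn by (subst sum.reindex) (auto simp: inj_on_def e_def)
    finally show ?thesis .
  qed
  have key: "\<bar>w u - w v\<bar> \<le> (\<Sum>x\<in>R. 4 * e x)" if uv: "u \<in> V" "v \<in> V" for u v
  proof -
    have gen: "w v' - w u' \<le> (\<Sum>x\<in>R. 4 * e x)" if "u' \<in> V" "v' \<in> V" "w u' \<le> w v'" for u' v'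
    proof (cases "w u' = w v'")
      case True
      then show ?thesis using e0 by (simp add: sum_nonneg)
    next
      case False
      with that have lt: "w u' < w v'" by simp
      have cov: "y \<in> (\<Union>x\<in>R. {w x - 2 * e x .. w x + 2 * e x})" if y: "w u' \<le> y" "y \<le> w v'" for y
      proof -
        have path: "(u', v') \<in> F\<^sup>*" using Fconn \<open>u' \<in> V\<close> \<open>v' \<in> V\<close> by blast
        have "\<exists>s. s \<in> V \<and> N s \<noteq> {} \<and> \<bar>y - w s\<bar> \<le> \<bar>w (p s) - w s\<bar>"
        proof (cases "y = w u'")
          case True
          have "u' \<noteq> v'" using lt by auto
          then obtain z where "(u', z) \<in> F" using path by (metis converse_rtranclE)
          then have "z \<in> N u'" using Nd by simp
          then show ?thesis using True \<open>u' \<in> V\<close> by auto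
        next
          case False
          then obtain s t where st: "(s, t) \<in> F" "w s \<le> y" "y \<le> w t"
            using path_cross[OF path, of w y] y by blast
          then have tN: "t \<in> N s" using Nd by simp
          then have "s \<in> V" using NV by blast
          moreover have "\<bar>y - w s\<bar> \<le> \<bar>w t - w s\<bar>" using st by auto
          moreover have "\<bar>w t - w s\<bar> \<le> \<bar>w (p s) - w s\<bar>" using pmax[OF \<open>s \<in> V\<close> tN] .
          ultimately show ?thesis using tN by fastforce
        qed
        then obtain s where s: "s \<in> V" "N s \<noteq> {}" "\<bar>y - w s\<bar> \<le> \<bar>w (p s) - w s\<bar>" by blast
        define x where "x = p s"
        have "x \<in> N s" using pN s unfolding x_def by blast
        then have xV: "x \<in> V" using NV by blast
        have sp: "s \<in> proposers V N p x" using s unfolding proposers_def x_def by blast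
        then have xR: "x \<in> R" unfolding R_def using xV by blast
        have "\<bar>w s - w x\<bar> \<le> e x" using amax[OF xV sp] unfolding e_def .
        then have "\<bar>y - w x\<bar> \<le> 2 * e x" using s(3) unfolding x_def by linarith
        then have "w x - 2 * e x \<le> y \<and> y \<le> w x + 2 * e x" by (simp add: abs_le_iff)
        then show ?thesis using xR by auto
      qed
      show ?thesis
        by (rule cover_len[OF finR e0]) (use lt cov in auto)
    qed
    show ?thesis
    proof (cases "w u \<le> w v")
      case True
      then show ?thesis using gen[OF uv] by simp
    next
      case False
      then show ?thesis using gen[OF uv(2,1)] by simp
    qed
  qed
  define S where "S = {\<bar>w u - w v\<bar> | u v. u \<in> V \<and> v \<in> V}"
  have "S = (\<lambda>(u, v). \<bar>w u - w v\<bar>) ` (V \<times> V)" unfolding S_def by auto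
  then have finS: "finite S" using assms(1) by simp
  have neS: "S \<noteq> {}" using assms(2) unfolding S_def by blast
  have "Max S \<le> (\<Sum>x\<in>R. 4 * e x)"
    using finS neS key unfolding S_def by (auto simp: Max_le_iff)
  then have disc: "discrepancy V w \<le> 8 * D_round V E P Acc w0 r"
    unfolding discrepancy_def S_def[symmetric] D by (simp add: sum_distrib_left)
  have "D_round V E P Acc w0 r \<ge> 0" unfolding D using e0 by (simp add: sum_nonneg)
  then show ?thesis using disc unfolding w_def by linarith
qed

end
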